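(* Let $G$ be a graph of order $n\geq 3$ such that $d(u)+d(v)\geq n-1$ for every pair of non-adjacent vertices $u,v\in V(G)$. Then $prc(G)=\chi'(G)$.
   Context: A path in an edge-coloured graph is a rainbow path if its edges receive pairwise distinct colours. The proper rainbow connection number $prc(G)$ of a connected graph is the minimum number of colours in a proper edge-colouring (adjacent edges get distinct colours) such that every two distinct vertices are joined by a rainbow path. $\chi'(G)$ is the chromatic index; $d(u)$ is the degree of $u$. *)

theory Defs
  imports Main
begin

definition simple_graph :: "'a set \<Rightarrow> 'a set set \<Rightarrow> bool" where
  "simple_graph V E \<longleftrightarrow> finite V \<and> (\<forall>e\<in>E. \<exists>u v. e = {u, v} \<and> u \<in> V \<and> v \<in> V \<and> u \<noteq> v)"

definition degree :: "'a set \<Rightarrow> 'a set set \<Rightarrow> 'a \<Rightarrow> nat" where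
  "degree V E u = card {v \<in> V. {u, v} \<in> E}"

definition is_path :: "'a set \<Rightarrow> 'a set set \<Rightarrow> 'a list \<Rightarrow> bool" where
  "is_path V E p \<longleftrightarrow> p \<noteq> [] \<and> set p \<subseteq> V \<and> distinct p \<and>
     (\<forall>i. Suc i < length p \<longrightarrow> {p ! i, p ! Suc i} \<in> E)"

definition rainbow_path :: "'a set \<Rightarrow> 'a set set \<Rightarrow> ('a set \<Rightarrow> nat) \<Rightarrow> 'a list \<Rightarrow> bool" where
  "rainbow_path V E c p \<longleftrightarrow> is_path V E p \<and>
     inj_on (\<lambda>i. c {p ! i, p ! Suc i}) {i. Suc i < length p}"

definition proper_edge_colouring :: "'a set set \<Rightarrow> ('a set \<Rightarrow> nat) \<Rightarrow> nat \<Rightarrow> bool" where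
  "proper_edge_colouring E c k \<longleftrightarrow> (\<forall>e\<in>E. c e < k) \<and>
     (\<forall>e\<in>E. \<forall>f\<in>E. e \<noteq> f \<and> e \<inter> f \<noteq> {} \<longrightarrow> c e \<noteq> c f)"

definition rainbow_connected :: "'a set \<Rightarrow> 'a set set \<Rightarrow> ('a set \<Rightarrow> nat) \<Rightarrow> bool" where
  "rainbow_connected V E c \<longleftrightarrow> (\<forall>u\<in>V. \<forall>v\<in>V. u \<noteq> v \<longrightarrow>
     (\<exists>p. rainbow_path V E c p \<and> hd p = u \<and> last p = v))"

definition chromatic_index :: "'a set set \<Rightarrow> nat" where
  "chromatic_index E = (LEAST k. \<exists>c. proper_edge_colouring E c k)"

definition proper_rainbow_connection_number :: "'a set \<Rightarrow> 'a set set \<Rightarrow> nat" where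
  "proper_rainbow_connection_number V E =
     (LEAST k. \<exists>c. proper_edge_colouring E c k \<and> rainbow_connected V E c)"

end

theory Submission
  imports Defs
begin

lemma common_nbr:
  assumes sg: "simple_graph V E" and n3: "card V \<ge> 3"
    and deg: "\<forall>u\<in>V. \<forall>v\<in>V. u \<noteq> v \<and> {u, v} \<notin> E \<longrightarrow> degree V E u + degree V E v \<ge> card V - 1"
    and u: "u \<in> V" and v: "v \<in> V" and uv: "u \<noteq> v" and ne: "{u, v} \<notin> E"
  shows "\<exists>w\<in>V. {u, w} \<in> E \<and> {w, v} \<in> E \<and> w \<noteq> u \<and> w \<noteq> v"
proof (rule ccontr)
  assume nc: "\<not> ?thesis"
  have fin: "finite V" using sg by (simp add: simple_graph_def)
  have noloop: "\<And>x. {x, x} \<notin> E"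
  proof
    fix x assume "{x, x} \<in> E"
    then obtain a b where "{x,x} = {a,b}" "a \<noteq> b" using sg unfolding simple_graph_def by blast
    then show False by (metis doubleton_eq_iff)
  qed
  define A where "A = {x \<in> V. {u, x} \<in> E}"
  define B where "B = {x \<in> V. {v, x} \<in> E}"
  have AS: "A \<subseteq> V - {u, v}" unfolding A_def using noloop ne by auto
  have BS: "B \<subseteq> V - {u, v}" unfolding B_def using noloop ne by (auto simp: insert_commute)
  have disj: "A \<inter> B = {}"
  proof (rule ccontr)
    assume "A \<inter> B \<noteq> {}"
    then obtain x where x: "x \<in> A" "x \<in> B" by blast
    then have "x \<in> V" "{u, x} \<in> E" "{x, v} \<in> E" unfolding A_def B_def by (auto simp: insert_commute)
    moreover have "x \<noteq> u" "x \<noteq> v" using x AS by auto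
    ultimately show False using nc by blast
  qed
  have "card A + card B = card (A \<union> B)"
    using disj fin AS BS by (simp add: card_Un_disjoint finite_subset)
  also have "\<dots> \<le> card (V - {u, v})"
    using AS BS fin by (intro card_mono) auto
  also have "\<dots> = card V - 2" using u v uv fin by (simp add: card_Diff_subset)
  finally have "card A + card B \<le> card V - 2" .
  moreover have "card A + card B \<ge> card V - 1"
    using deg u v uv ne unfolding A_def B_def degree_def by simp
  ultimately show False using n3 by linarith
qed

lemma all_rc:
  assumes sg: "simple_graph V E" and n3: "card V \<ge> 3"
    and deg: "\<forall>u\<in>V. \<forall>v\<in>V. u \<noteq> v \<and> {u, v} \<notin> E \<longrightarrow> degree V E u + degree V E v \<ge> card V - 1"
    and pc: "proper_edge_colouring E c k"
  shows "rainbow_connected V E c"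
  unfolding rainbow_connected_def
proof (intro ballI impI)
  fix u v assume u: "u \<in> V" and v: "v \<in> V" and uv: "u \<noteq> v"
  show "\<exists>p. rainbow_path V E c p \<and> hd p = u \<and> last p = v"
  proof (cases "{u, v} \<in> E")
    case True
    have idx: "{i. Suc i < length [u, v]} = {0}" by auto
    have e: "\<forall>i. Suc i < length [u, v] \<longrightarrow> {[u, v] ! i, [u, v] ! Suc i} \<in> E"
    proof (intro allI impI)
      fix i assume "Suc i < length [u, v]"
      then have "i = 0" by simp
      then show "{[u, v] ! i, [u, v] ! Suc i} \<in> E" using True by simp
    qed
    have "is_path V E [u, v]"
      unfolding is_path_def using u v uv e by simp
    then have "rainbow_path V E c [u, v]"
      unfolding rainbow_path_def idx by simp
    then show ?thesis by (intro exI[of _ "_"]) auto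
  next
    case False
    then obtain w where w: "w \<in> V" "{u, w} \<in> E" "{w, v} \<in> E" "w \<noteq> u" "w \<noteq> v"
      using common_nbr[OF sg n3 deg u v uv] by blast
    have ne1: "{u, w} \<noteq> {w, v}" using uv w by (auto simp: doubleton_eq_iff)
    have ne2: "{u, w} \<inter> {w, v} \<noteq> {}" by auto
    have pr: "\<forall>e\<in>E. \<forall>f\<in>E. e \<noteq> f \<and> e \<inter> f \<noteq> {} \<longrightarrow> c e \<noteq> c f"
      using pc unfolding proper_edge_colouring_def by (rule conjunct2)
    have cd: "c {u, w} \<noteq> c {w, v}" by (rule pr[rule_format, OF w(2) w(3) conjI[OF ne1 ne2]])
    have idx: "{i. Suc i < length [u, w, v]} = {0, 1}" by (auto simp: less_Suc_eq)
    have e: "\<forall>i. Suc i < length [u, w, v] \<longrightarrow> {[u, w, v] ! i, [u, w, v] ! Suc i} \<in> E"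
    proof (intro allI impI)
      fix i assume "Suc i < length [u, w, v]"
      then have "i = 0 \<or> i = 1" by auto
      then show "{[u, w, v] ! i, [u, w, v] ! Suc i} \<in> E" using w by auto
    qed
    have "is_path V E [u, w, v]"
      unfolding is_path_def using u v uv w e by simp
    moreover have "inj_on (\<lambda>i. c {[u, w, v] ! i, [u, w, v] ! Suc i}) {0, 1}"
      using cd by simp
    ultimately have "rainbow_path V E c [u, w, v]"
      unfolding rainbow_path_def idx by simp
    then show ?thesis by (intro exI[of _ "_"]) auto
  qed
qed

theorem proposition5p9:
  fixes V :: "'a set" and E :: "'a set set"
  assumes "simple_graph V E"
    and "card V \<ge> 3"
    and "\<forall>u\<in>V. \<forall>v\<in>V. u \<noteq> v \<and> {u, v} \<notin> E \<longrightarrow> degree V E u + degree V E v \<ge> card V - 1"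
  shows "proper_rainbow_connection_number V E = chromatic_index E"
proof -
  have "\<And>k. (\<exists>c. proper_edge_colouring E c k \<and> rainbow_connected V E c) = (\<exists>c. proper_edge_colouring E c k)"
    using all_rc[OF assms] by blast
  then show ?thesis unfolding proper_rainbow_connection_number_def chromatic_index_def by simp
qed

end
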